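(* Let $A$ be a finite-dimensional evolution algebra. Then $A$ is semisimple if and only if $A$ has a unit.
   Context: An evolution algebra is an algebra $A$ over $\mathbb{K}\in\{\mathbb{R},\mathbb{C}\}$ with a basis $\{e_i\}$ (natural basis) with $e_ie_j=0$ for $i\neq j$. An ideal $M$ is modular if some $u\in A$ satisfies $a-au\in M$ for all $a\in A$; $\mathrm{Rad}(A)$ is the intersection of all maximal modular ideals (equal to $A$ if there are none); $A$ is semisimple if $\mathrm{Rad}(A)=\{0\}$. *)

theory Defs
  imports Complex_Main
begin

definition is_algebra :: "('k::field \<Rightarrow> 'v::ab_group_add \<Rightarrow> 'v) \<Rightarrow> ('v \<Rightarrow> 'v \<Rightarrow> 'v) \<Rightarrow> bool" where
  "is_algebra scale mul \<longleftrightarrow>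
     vector_space scale \<and>
     (\<forall>x. Vector_Spaces.linear scale scale (mul x)) \<and>
     (\<forall>y. Vector_Spaces.linear scale scale (\<lambda>x. mul x y))"

definition natural_basis :: "('k::field \<Rightarrow> 'v::ab_group_add \<Rightarrow> 'v) \<Rightarrow> ('v \<Rightarrow> 'v \<Rightarrow> 'v) \<Rightarrow> 'v set \<Rightarrow> bool" where
  "natural_basis scale mul B \<longleftrightarrow>
     \<not> module.dependent scale B \<and> module.span scale B = UNIV \<and>
     (\<forall>e\<in>B. \<forall>e'\<in>B. e \<noteq> e' \<longrightarrow> mul e e' = 0)"

text \<open>Finite-dimensional evolution algebra: an algebra having a natural basis,
  which is finite (equivalently, the algebra is finite-dimensional).\<close>
definition fin_dim_evolution_algebra :: "('k::field \<Rightarrow> 'v::ab_group_add \<Rightarrow> 'v) \<Rightarrow> ('v \<Rightarrow> 'v \<Rightarrow> 'v) \<Rightarrow> bool" where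
  "fin_dim_evolution_algebra scale mul \<longleftrightarrow>
     is_algebra scale mul \<and> (\<exists>B. finite B \<and> natural_basis scale mul B)"

definition alg_ideal :: "('k::field \<Rightarrow> 'v::ab_group_add \<Rightarrow> 'v) \<Rightarrow> ('v \<Rightarrow> 'v \<Rightarrow> 'v) \<Rightarrow> 'v set \<Rightarrow> bool" where
  "alg_ideal scale mul M \<longleftrightarrow>
     module.subspace scale M \<and> (\<forall>a m. m \<in> M \<longrightarrow> mul a m \<in> M \<and> mul m a \<in> M)"

definition modular_ideal :: "('k::field \<Rightarrow> 'v::ab_group_add \<Rightarrow> 'v) \<Rightarrow> ('v \<Rightarrow> 'v \<Rightarrow> 'v) \<Rightarrow> 'v set \<Rightarrow> bool" where
  "modular_ideal scale mul M \<longleftrightarrow>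
     alg_ideal scale mul M \<and> (\<exists>u. \<forall>a. a - mul a u \<in> M)"

definition maximal_modular_ideal :: "('k::field \<Rightarrow> 'v::ab_group_add \<Rightarrow> 'v) \<Rightarrow> ('v \<Rightarrow> 'v \<Rightarrow> 'v) \<Rightarrow> 'v set \<Rightarrow> bool" where
  "maximal_modular_ideal scale mul M \<longleftrightarrow>
     modular_ideal scale mul M \<and> M \<noteq> UNIV \<and>
     (\<forall>N. alg_ideal scale mul N \<and> M \<subseteq> N \<and> N \<noteq> UNIV \<longrightarrow> N = M)"

text \<open>Radical: intersection of all maximal modular ideals (UNIV if there are none,
  since the empty intersection is UNIV).\<close>
definition alg_rad :: "('k::field \<Rightarrow> 'v::ab_group_add \<Rightarrow> 'v) \<Rightarrow> ('v \<Rightarrow> 'v \<Rightarrow> 'v) \<Rightarrow> 'v set" where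
  "alg_rad scale mul = \<Inter> {M. maximal_modular_ideal scale mul M}"

definition semisimple :: "('k::field \<Rightarrow> 'v::ab_group_add \<Rightarrow> 'v) \<Rightarrow> ('v \<Rightarrow> 'v \<Rightarrow> 'v) \<Rightarrow> bool" where
  "semisimple scale mul \<longleftrightarrow> alg_rad scale mul = {0}"

definition has_unit :: "('v \<Rightarrow> 'v \<Rightarrow> 'v) \<Rightarrow> bool" where
  "has_unit mul \<longleftrightarrow> (\<exists>u. \<forall>a. mul u a = a \<and> mul a u = a)"

end

theory Submission
  imports Defs
begin

locale evo = vector_space +
  fixes mul :: "'b \<Rightarrow> 'b \<Rightarrow> 'b" and B :: "'b set"
  assumes linL: "\<And>x. Vector_Spaces.linear scale scale (mul x)"
    and linR: "\<And>y. Vector_Spaces.linear scale scale (\<lambda>x. mul x y)"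
    and finB: "finite B" and indepB: "\<not> dependent B" and spanB: "span B = UNIV"
    and orth: "\<And>e e'. e \<in> B \<Longrightarrow> e' \<in> B \<Longrightarrow> e \<noteq> e' \<Longrightarrow> mul e e' = 0"
begin

definition c where "c x b = representation B x b"

lemma expand: "x = (\<Sum>b\<in>B. c x b *s b)"
  unfolding c_def using sum_representation_eq[of B x B] indepB spanB finB by auto

lemma c_basis: "b \<in> B \<Longrightarrow> c b b' = (if b' = b then 1 else 0)"
  unfolding c_def using representation_basis[of B b] indepB by auto

lemma c_add: "c (x + y) b = c x b + c y b"
  unfolding c_def using representation_add[of B y x] indepB spanB by auto
lemma c_diff: "c (x - y) b = c x b - c y b"
  unfolding c_def using representation_diff[of B y x] indepB spanB by auto
lemma c_scale: "c (r *s x) b = r * c x b"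
  unfolding c_def using representation_scale[of B x r] indepB spanB by auto
lemma c_zero: "c 0 b = 0"
  unfolding c_def by (simp add: representation_zero)
lemma c_sum: "c (sum f I) b = (\<Sum>i\<in>I. c (f i) b)"
  unfolding c_def using representation_sum[of B I f] indepB spanB by auto

lemma basis_nz: "b \<in> B \<Longrightarrow> b \<noteq> 0"
  using indepB dependent_zero by blast

lemma c_eq0: "(\<And>b. b \<in> B \<Longrightarrow> c x b = 0) \<Longrightarrow> x = 0"
  by (metis (no_types, lifting) expand scale_zero_left sum.neutral)

lemma mulL_lin: "mul x (a + b) = mul x a + mul x b" "mul x (r *s a) = r *s mul x a"
  "mul x (a - b) = mul x a - mul x b" "mul x (sum f I) = (\<Sum>i\<in>I. mul x (f i))" "mul x 0 = 0"
proof -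
  interpret L: Vector_Spaces.linear scale scale "mul x" by (rule linL)
  show "mul x (a + b) = mul x a + mul x b" "mul x (r *s a) = r *s mul x a"
    "mul x (a - b) = mul x a - mul x b" "mul x (sum f I) = (\<Sum>i\<in>I. mul x (f i))" "mul x 0 = 0"
    by (simp_all add: L.add L.scale L.diff L.sum)
qed

lemma mulR_lin: "mul (a + b) y = mul a y + mul b y" "mul (r *s a) y = r *s mul a y"
  "mul (a - b) y = mul a y - mul b y" "mul (sum f I) y = (\<Sum>i\<in>I. mul (f i) y)" "mul 0 y = 0"
proof -
  interpret L: Vector_Spaces.linear scale scale "\<lambda>x. mul x y" by (rule linR)
  show "mul (a + b) y = mul a y + mul b y" "mul (r *s a) y = r *s mul a y"
    "mul (a - b) y = mul a y - mul b y" "mul (sum f I) y = (\<Sum>i\<in>I. mul (f i) y)" "mul 0 y = 0"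
    using L.add L.scale L.diff L.sum L.zero by auto
qed

lemma mul_basis_left: assumes "b \<in> B" shows "mul x b = c x b *s mul b b"
proof -
  have "mul x b = mul (\<Sum>b'\<in>B. c x b' *s b') b" by (rule arg_cong[where f="\<lambda>z. mul z b"], rule expand)
  also have "\<dots> = (\<Sum>b'\<in>B. c x b' *s mul b' b)" by (simp add: mulR_lin)
  also have "\<dots> = (\<Sum>b'\<in>B. if b' = b then c x b *s mul b b else 0)"
    by (rule sum.cong) (auto simp: orth assms)
  also have "\<dots> = c x b *s mul b b" using assms finB by simp
  finally show ?thesis .
qed

lemma mul_basis_right: assumes "b \<in> B" shows "mul b x = c x b *s mul b b"
proof -
  have "mul b x = mul b (\<Sum>b'\<in>B. c x b' *s b')" by (rule arg_cong[where f="mul b"], rule expand)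
  also have "\<dots> = (\<Sum>b'\<in>B. c x b' *s mul b b')" by (simp add: mulL_lin)
  also have "\<dots> = (\<Sum>b'\<in>B. if b' = b then c x b *s mul b b else 0)"
    by (rule sum.cong) (auto simp: orth assms)
  also have "\<dots> = c x b *s mul b b" using assms finB by simp
  finally show ?thesis .
qed

lemma mul_formula: "mul x y = (\<Sum>b\<in>B. (c x b * c y b) *s mul b b)"
proof -
  have "mul x y = mul x (\<Sum>b\<in>B. c y b *s b)" by (rule arg_cong[where f="mul x"], rule expand)
  also have "\<dots> = (\<Sum>b\<in>B. c y b *s mul x b)" by (simp add: mulL_lin)
  also have "\<dots> = (\<Sum>b\<in>B. (c x b * c y b) *s mul b b)"
    by (rule sum.cong) (auto simp: mul_basis_left[of _ x] mult.commute)
  finally show ?thesis .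
qed

lemma minus_coord: assumes "k \<in> B" shows "x - c x k *s k = (\<Sum>b\<in>B-{k}. c x b *s b)"
proof -
  have "x = c x k *s k + (\<Sum>b\<in>B-{k}. c x b *s b)"
    using trans[OF expand[of x] sum.remove[OF finB assms, of "\<lambda>b. c x b *s b"]] .
  then show ?thesis by (simp add: algebra_simps)
qed


subsection \<open>Unit implies semisimple\<close>

context
  fixes u assumes u: "\<And>a. mul u a = a \<and> mul a u = a"
begin

lemma cu_nz: assumes "k \<in> B" shows "c u k \<noteq> 0"
proof
  assume "c u k = 0"
  have "k = mul k u" using u by simp
  also have "\<dots> = c u k *s mul k k" using mul_basis_right[OF assms] .
  finally show False using \<open>c u k = 0\<close> basis_nz[OF assms] by simp
qed

lemma dk_unit: assumes "k \<in> B" shows "mul k k = (1 / c u k) *s k"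
proof -
  have "k = c u k *s mul k k" using u[of k] mul_basis_right[OF assms, of u] by simp
  then have "(1 / c u k) *s k = (1 / c u k) *s (c u k *s mul k k)" by simp
  then show ?thesis using cu_nz[OF assms] by simp
qed

lemma c_mul_unit: assumes "k \<in> B" shows "c (mul x y) k = c x k * c y k / c u k"
proof -
  have "c (mul x y) k = (\<Sum>b\<in>B. (c x b * c y b) * ((1 / c u b) * c b k))"
    by (simp add: mul_formula[of x y] c_sum c_scale dk_unit cong: sum.cong)
  also have "\<dots> = (\<Sum>b\<in>B. if b = k then c x k * c y k / c u k else 0)"
    by (rule sum.cong) (auto simp: c_basis)
  also have "\<dots> = c x k * c y k / c u k" using assms finB by simp
  finally show ?thesis .
qed

lemma Mk_max: assumes "k \<in> B" shows "maximal_modular_ideal scale mul {x. c x k = 0}"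
proof -
  let ?M = "{x. c x k = 0}"
  have sub: "subspace ?M" unfolding subspace_def by (auto simp: c_zero c_add c_scale)
  have id: "alg_ideal scale mul ?M" unfolding alg_ideal_def
    using sub by (auto simp: c_mul_unit assms)
  have ck: "c k k = 1" using c_basis[OF assms] by simp
  have mod: "modular_ideal scale mul ?M" unfolding modular_ideal_def
    using id u by (auto intro!: exI[of _ u] simp: c_zero)
  have ne: "?M \<noteq> UNIV"
  proof
    assume "?M = UNIV" hence "k \<in> ?M" by blast
    with ck show False by simp
  qed
  have mx: "N = ?M" if N: "alg_ideal scale mul N" "?M \<subseteq> N" "N \<noteq> UNIV" for N
  proof (rule ccontr)
    assume "N \<noteq> ?M"
    then obtain x where x: "x \<in> N" "c x k \<noteq> 0" using N(2) by auto
    have sN: "subspace N" using N(1) by (simp add: alg_ideal_def)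
    have "mul x k \<in> N" using N(1) x(1) by (simp add: alg_ideal_def)
    hence "(c u k / c x k) *s mul x k \<in> N" using sN by (rule subspace_scale[rotated])
    moreover have "(c u k / c x k) *s mul x k = k"
      using x(2) cu_nz[OF assms] by (simp add: mul_basis_left[OF assms, of x] dk_unit[OF assms])
    ultimately have kN: "k \<in> N" by simp
    have "y \<in> N" for y
    proof -
      have "y - c y k *s k \<in> ?M" by (simp add: c_diff c_scale ck)
      hence "y - c y k *s k \<in> N" using N(2) by auto
      moreover have "c y k *s k \<in> N" using kN sN by (rule subspace_scale[rotated])
      ultimately have "(y - c y k *s k) + c y k *s k \<in> N" using subspace_add[OF sN] by blast
      then show ?thesis by simp
    qed
    with N(3) show False by auto
  qed
  show ?thesis unfolding maximal_modular_ideal_def using mod ne mx by blast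
qed

lemma unit_semisimple: "semisimple scale mul"
  unfolding semisimple_def alg_rad_def
proof
  show "\<Inter> {M. maximal_modular_ideal scale mul M} \<subseteq> {0}"
  proof
    fix x assume x: "x \<in> \<Inter> {M. maximal_modular_ideal scale mul M}"
    have "c x k = 0" if "k \<in> B" for k using x Mk_max[OF that] by blast
    then show "x \<in> {0}" using c_eq0 by auto
  qed
  show "{0} \<subseteq> \<Inter> {M. maximal_modular_ideal scale mul M}"
    by (auto simp: maximal_modular_ideal_def modular_ideal_def alg_ideal_def subspace_0)
qed

end

subsection \<open>Semisimple implies unit\<close>

lemma lemA:
  assumes M: "maximal_modular_ideal scale mul M" and e: "e \<in> B" "e \<notin> M"
    and e': "e' \<in> B" "e' \<noteq> e"
  shows "e' \<in> M"
proof -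
  have id: "alg_ideal scale mul M" and ne: "M \<noteq> UNIV"
    and mx: "\<And>N. alg_ideal scale mul N \<Longrightarrow> M \<subseteq> N \<Longrightarrow> N \<noteq> UNIV \<Longrightarrow> N = M"
    using M unfolding maximal_modular_ideal_def modular_ideal_def by blast+
  obtain u where u: "\<And>a. a - mul a u \<in> M"
    using M unfolding maximal_modular_ideal_def modular_ideal_def by blast
  have sM: "subspace M" using id by (simp add: alg_ideal_def)
  have idM: "mul a m \<in> M" "mul m a \<in> M" if "m \<in> M" for a m
    using id that by (auto simp: alg_ideal_def)
  have mu: "mul b u = c u b *s mul b b" if "b \<in> B" for b using mul_basis_right[OF that] .
  have cue: "c u e \<noteq> 0"
  proof
    assume "c u e = 0"
    then have "e - mul e u = e" using mu[OF e(1)] by simp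
    then show False using u[of e] e(2) by simp
  qed
  let ?N = "span (insert e M)"
  have spM: "span M = M" using sM by simp
  have Nchar: "n \<in> ?N \<longleftrightarrow> (\<exists>t. n - t *s e \<in> M)" for n
    unfolding span_insert spM by simp
  have deN: "mul e e \<in> ?N"
  proof -
    have "mul e e - (1 / c u e) *s e = - ((1 / c u e) *s (e - mul e u))"
      using cue by (simp add: mu[OF e(1)] scale_right_diff_distrib)
    also have "\<dots> \<in> M" using u[of e] sM by (simp add: subspace_neg subspace_scale)
    finally show ?thesis using Nchar by blast
  qed
  have sN: "subspace ?N" by simp
  have MN: "M \<subseteq> ?N" using span_superset[of "insert e M"] by blast
  have idN: "alg_ideal scale mul ?N" unfolding alg_ideal_def
  proof (intro conjI[OF sN] allI impI)
    fix a n assume "n \<in> ?N"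
    then obtain t where t: "n - t *s e \<in> M" using Nchar by blast
    define m where "m = n - t *s e"
    have n: "n = m + t *s e" by (simp add: m_def)
    have "mul a n = mul a m + (t * c a e) *s mul e e"
      by (simp add: n mulL_lin mul_basis_left[OF e(1), of a])
    moreover have "mul n a = mul m a + (t * c a e) *s mul e e"
      by (simp add: n mulR_lin mul_basis_right[OF e(1), of a])
    moreover have "mul a m \<in> ?N" "mul m a \<in> ?N" using idM t MN by (auto simp: m_def)
    moreover have "(t * c a e) *s mul e e \<in> ?N" using deN sN by (rule subspace_scale[rotated])
    ultimately show "mul a n \<in> ?N \<and> mul n a \<in> ?N"
      using sN by (simp add: subspace_add)
  qed
  have "?N \<noteq> M" using e(2) span_base[of e "insert e M"] by auto
  then have "?N = UNIV" using mx[OF idN MN] by blast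
  then obtain t where t: "e' - t *s e \<in> M" using Nchar by blast
  define m where "m = e' - t *s e"
  have "mul e' e' = mul e' m + t *s mul e' e" by (simp add: m_def mulL_lin)
  also have "\<dots> = mul e' m" using orth[OF e'(1) e(1) e'(2)] by (simp add: mulL_lin)
  finally have "mul e' e' \<in> M" using idM t by (simp add: m_def)
  hence "mul e' u \<in> M" using mu[OF e'(1)] sM by (simp add: subspace_scale)
  hence "(e' - mul e' u) + mul e' u \<in> M" using u[of e'] subspace_add[OF sM] by blast
  then show ?thesis by simp
qed

lemma lemB:
  assumes M: "maximal_modular_ideal scale mul M" and e: "e \<in> B" "e \<notin> M" and x: "x \<in> M"
  shows "c x e = 0"
proof (rule ccontr)
  assume nz: "c x e \<noteq> 0"
  have sM: "subspace M" using M by (simp add: maximal_modular_ideal_def modular_ideal_def alg_ideal_def)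
  have "(\<Sum>b\<in>B-{e}. c x b *s b) \<in> M"
    using lemA[OF M e] sM by (intro subspace_sum) (auto simp: subspace_scale)
  hence "x - c x e *s e \<in> M" using minus_coord[OF e(1)] by simp
  hence "x - (x - c x e *s e) \<in> M" using subspace_diff[OF sM x] by blast
  hence "c x e *s e \<in> M" by simp
  hence "(1 / c x e) *s (c x e *s e) \<in> M" using subspace_scale[OF sM] by blast
  then show False using nz e(2) by simp
qed

lemma semisimple_unit:
  assumes ss: "semisimple scale mul" shows "has_unit mul"
proof -
  have ex: "\<exists>M. maximal_modular_ideal scale mul M \<and> k \<notin> M" if "k \<in> B" for k
    using ss basis_nz[OF that] unfolding semisimple_def alg_rad_def by blast
  define lam where "lam k = c (mul k k) k" for k
  have dk: "mul k k = lam k *s k" if k: "k \<in> B" for k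
  proof -
    have "c (mul k k) b = 0" if b: "b \<in> B" "b \<noteq> k" for b
    proof -
      obtain M where M: "maximal_modular_ideal scale mul M" "b \<notin> M" using ex[OF b(1)] by blast
      have "k \<in> M" using lemA[OF M(1) b(1) M(2) k] b(2) by simp
      hence "mul k k \<in> M" using M(1)
        by (simp add: maximal_modular_ideal_def modular_ideal_def alg_ideal_def)
      then show ?thesis using lemB[OF M(1) b(1) M(2)] by simp
    qed
    hence "(\<Sum>b\<in>B. c (mul k k) b *s b) = (\<Sum>b\<in>B. if b = k then lam k *s k else 0)"
      by (intro sum.cong) (auto simp: lam_def)
    also have "\<dots> = lam k *s k" using finB k by simp
    finally show ?thesis by (rule trans[OF expand])
  qed
  have lnz: "lam k \<noteq> 0" if k: "k \<in> B" for k
  proof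
    assume "lam k = 0"
    obtain M where M: "maximal_modular_ideal scale mul M" "k \<notin> M" using ex[OF k] by blast
    obtain u where u: "\<And>a. a - mul a u \<in> M"
      using M(1) unfolding maximal_modular_ideal_def modular_ideal_def by blast
    have "mul k u = 0" using mul_basis_right[OF k, of u] dk[OF k] \<open>lam k = 0\<close> by simp
    then show False using u[of k] M(2) by simp
  qed
  define u0 where "u0 = (\<Sum>b\<in>B. (1 / lam b) *s b)"
  have cu0: "c u0 k = 1 / lam k" if k: "k \<in> B" for k
  proof -
    have "c u0 k = (\<Sum>b\<in>B. (1 / lam b) * c b k)" by (simp add: u0_def c_sum c_scale)
    also have "\<dots> = (\<Sum>b\<in>B. if b = k then 1 / lam k else 0)"
      by (rule sum.cong) (auto simp: c_basis)
    also have "\<dots> = 1 / lam k" using finB k by simp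
    finally show ?thesis .
  qed
  have l: "mul u0 a = a" for a
  proof -
    have "mul u0 a = (\<Sum>b\<in>B. (c u0 b * c a b) *s mul b b)" by (rule mul_formula)
    also have "\<dots> = (\<Sum>b\<in>B. c a b *s b)"
      by (rule sum.cong) (auto simp: cu0 dk lnz)
    finally show ?thesis using expand[of a] by metis
  qed
  have r: "mul a u0 = a" for a
  proof -
    have "mul a u0 = (\<Sum>b\<in>B. (c a b * c u0 b) *s mul b b)" by (rule mul_formula)
    also have "\<dots> = (\<Sum>b\<in>B. c a b *s b)"
      by (rule sum.cong) (auto simp: cu0 dk lnz)
    finally show ?thesis using expand[of a] by metis
  qed
  show ?thesis unfolding has_unit_def using l r by blast
qed

lemma main_evo: "semisimple scale mul \<longleftrightarrow> has_unit mul"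
  using semisimple_unit unit_semisimple unfolding has_unit_def by blast

end

lemma generic:
  fixes sc :: "'k::field \<Rightarrow> 'v::ab_group_add \<Rightarrow> 'v" and mul :: "'v \<Rightarrow> 'v \<Rightarrow> 'v"
  assumes "fin_dim_evolution_algebra sc mul"
  shows "semisimple sc mul \<longleftrightarrow> has_unit mul"
proof -
  obtain B where B: "finite B" "natural_basis sc mul B" and A: "is_algebra sc mul"
    using assms unfolding fin_dim_evolution_algebra_def by blast
  have vs: "vector_space sc" using A by (simp add: is_algebra_def)
  interpret evo sc mul B
    apply (rule evo.intro[OF vs])
    apply (rule evo_axioms.intro)
    using A B unfolding is_algebra_def natural_basis_def by auto
  show ?thesis by (rule main_evo)
qed

theorem corollary3p15:
  fixes scR :: "real \<Rightarrow> 'v::ab_group_add \<Rightarrow> 'v" and mulR :: "'v \<Rightarrow> 'v \<Rightarrow> 'v"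
    and scC :: "complex \<Rightarrow> 'w::ab_group_add \<Rightarrow> 'w" and mulC :: "'w \<Rightarrow> 'w \<Rightarrow> 'w"
  shows "(fin_dim_evolution_algebra scR mulR \<longrightarrow> (semisimple scR mulR \<longleftrightarrow> has_unit mulR)) \<and>
         (fin_dim_evolution_algebra scC mulC \<longrightarrow> (semisimple scC mulC \<longleftrightarrow> has_unit mulC))"
  using generic[of scR mulR] generic[of scC mulC] by blast

end
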